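(* Consider the perturbed federated algorithm described in the context, with $\beta\in(0,1)$. Assume that the bounded variance, bounded stochastic gradient norm and $L$-smoothness assumptions hold. Then for every client $i$, round $t\ge0$ and step $k\in\{0,\dots,E-1\}$, $$\mathbb{E}\|\overline{\mathbf{w}}_{t,k}-\widetilde{\mathbf{w}}^i_{t,k}\|^2\le4\gamma_t^2E^2G^2\Big[4+(1-\beta)^2+\mathbb{1}_{t\ge1}\frac{8\gamma_{t-1}^2}{\gamma_t^2}\Big(1-\frac1\beta\Big)^2\Big].$$
   Context: Setting: there are $C$ clients with local objectives $F_i:\mathbb{R}^D\to\mathbb{R}$. Similarity weights $p_{in}\ge0$ are symmetric, satisfy $p_{ii}=0$, and $\sum_{i,n}p_{in}=1$. Let $p_i=\sum_np_{in}>0$. Algorithm, with parameter $\beta$, $E\ge1$ local steps and step sizes $\gamma_t$, all clients participating: - $\mathbf{u}^i_0=\overline{\mathbf{w}}_{0,0}$. - In round $t$, $\mathbf{w}^i_{t,0}=\overline{\mathbf{w}}_{t,0}$. For $k=0,\dots,E-1$, $\widetilde{\mathbf{w}}^i_{t,k}=\beta\mathbf{w}^i_{t,k}+(1-\beta)\mathbf{u}^i_t$ and $\mathbf{w}^i_{t,k+1}=\mathbf{w}^i_{t,k}-\gamma_tg_i(\widetilde{\mathbf{w}}^i_{t,k})$, with stochastic gradients $g_i$ of $F_i$ sampled independently given the past. - $\overline{\mathbf{w}}_{t,k}=\sum_ip_i\mathbf{w}^i_{t,k}$ and $\overline{\mathbf{w}}_{t+1,0}=\overline{\mathbf{w}}_{t,E}$.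 - For $t\ge1$, $\mathbf{u}^i_t=\frac1{p_i}\sum_np_{in}\mathbf{w}^n_{t-1,E}$. Assumptions: - Unbiasedness: $\mathbb{E}\,g_i(\widetilde{\mathbf{w}}^i_{t,k})=\nabla F_i(\widetilde{\mathbf{w}}^i_{t,k})$. - Variance: $\mathbb{E}\|g_i(\widetilde{\mathbf{w}}^i_{t,k})-\nabla F_i(\widetilde{\mathbf{w}}^i_{t,k})\|^2\le\sigma^2$. - Bounded second moment: $\mathbb{E}\|g_i(\widetilde{\mathbf{w}}^i_{t,k})\|^2\le G^2$. - Each $\nabla F_i$ is $L$-Lipschitz. $\mathbb{E}$ is total expectation. *)

theory Defs
  imports "HOL-Probability.Probability"
begin

definition pw :: "nat \<Rightarrow> (nat \<Rightarrow> nat \<Rightarrow> real) \<Rightarrow> nat \<Rightarrow> real" where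
  "pw C p i = (\<Sum>n<C. p i n)"

text \<open>Local iterates within one round for one client:
  start point w (= wbar_{t,0}), anchor u (= u^i_t), step size gam,
  gradient oracle G k x (stochastic gradient at step k evaluated at x).
  loc ... k = w^i_{t,k}.\<close>

primrec loc :: "real \<Rightarrow> real \<Rightarrow> (nat \<Rightarrow> 'v::real_vector \<Rightarrow> 'v) \<Rightarrow> 'v \<Rightarrow> 'v \<Rightarrow> nat \<Rightarrow> 'v" where
  "loc \<beta> gam G u w 0 = w"
| "loc \<beta> gam G u w (Suc k) =
     loc \<beta> gam G u w k - gam *\<^sub>R G k (\<beta> *\<^sub>R loc \<beta> gam G u w k + (1 - \<beta>) *\<^sub>R u)"

text \<open>Round state (wbar_{t,0}, u_t) along a sample path omega.
  g i x s : stochastic gradient of client i at point x with sample s;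
  xi i t k omega : sample used by client i in round t, local step k.\<close>

primrec rnd :: "nat \<Rightarrow> (nat \<Rightarrow> nat \<Rightarrow> real) \<Rightarrow> real \<Rightarrow> nat \<Rightarrow> (nat \<Rightarrow> real)
    \<Rightarrow> (nat \<Rightarrow> 'v::real_vector \<Rightarrow> 's \<Rightarrow> 'v) \<Rightarrow> (nat \<Rightarrow> nat \<Rightarrow> nat \<Rightarrow> 'a \<Rightarrow> 's) \<Rightarrow> 'v \<Rightarrow> 'a
    \<Rightarrow> nat \<Rightarrow> 'v \<times> (nat \<Rightarrow> 'v)" where
  "rnd C p \<beta> E \<gamma> g \<xi> w0 \<omega> 0 = (w0, \<lambda>i. w0)"
| "rnd C p \<beta> E \<gamma> g \<xi> w0 \<omega> (Suc t) =
     (let st = rnd C p \<beta> E \<gamma> g \<xi> w0 \<omega> t;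
          e = (\<lambda>n. loc \<beta> (\<gamma> t) (\<lambda>k x. g n x (\<xi> n t k \<omega>)) (snd st n) (fst st) E)
      in ((\<Sum>n<C. pw C p n *\<^sub>R e n),
          (\<lambda>i. (1 / pw C p i) *\<^sub>R (\<Sum>n<C. p i n *\<^sub>R e n))))"

definition fed_w where
  "fed_w C p \<beta> E \<gamma> g \<xi> w0 i t k \<omega> =
     loc \<beta> (\<gamma> t) (\<lambda>k x. g i x (\<xi> i t k \<omega>)) (snd (rnd C p \<beta> E \<gamma> g \<xi> w0 \<omega> t) i)
         (fst (rnd C p \<beta> E \<gamma> g \<xi> w0 \<omega> t)) k"

definition fed_u where
  "fed_u C p \<beta> E \<gamma> g \<xi> w0 i t \<omega> = snd (rnd C p \<beta> E \<gamma> g \<xi> w0 \<omega> t) i"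

definition fed_wt where
  "fed_wt C p \<beta> E \<gamma> g \<xi> w0 i t k \<omega> =
     \<beta> *\<^sub>R fed_w C p \<beta> E \<gamma> g \<xi> w0 i t k \<omega> + (1 - \<beta>) *\<^sub>R fed_u C p \<beta> E \<gamma> g \<xi> w0 i t \<omega>"

definition fed_wbar where
  "fed_wbar C p \<beta> E \<gamma> g \<xi> w0 t k \<omega> =
     (\<Sum>i<C. pw C p i *\<^sub>R fed_w C p \<beta> E \<gamma> g \<xi> w0 i t k \<omega>)"

end

theory Submission
  imports Defs
begin


lemma wCS:
  fixes w r :: "'i \<Rightarrow> real"
  assumes "\<And>n. n \<in> A \<Longrightarrow> 0 \<le> w n"
  shows "(\<Sum>n\<in>A. w n * r n)\<^sup>2 \<le> (\<Sum>n\<in>A. w n) * (\<Sum>n\<in>A. w n * (r n)\<^sup>2)"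
proof -
  have "(\<Sum>n\<in>A. sqrt (w n) * (sqrt (w n) * r n))\<^sup>2
      \<le> (\<Sum>n\<in>A. (sqrt (w n))\<^sup>2) * (\<Sum>n\<in>A. (sqrt (w n) * r n)\<^sup>2)"
    by (rule Cauchy_Schwarz_ineq_sum)
  moreover have "(\<Sum>n\<in>A. sqrt (w n) * (sqrt (w n) * r n)) = (\<Sum>n\<in>A. w n * r n)"
    by (rule sum.cong) (use assms in \<open>auto simp: mult.assoc[symmetric] real_sqrt_mult_self\<close>)
  moreover have "(\<Sum>n\<in>A. (sqrt (w n))\<^sup>2) = (\<Sum>n\<in>A. w n)"
    by (rule sum.cong) (use assms in auto)
  moreover have "(\<Sum>n\<in>A. (sqrt (w n) * r n)\<^sup>2) = (\<Sum>n\<in>A. w n * (r n)\<^sup>2)"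
    by (rule sum.cong) (use assms in \<open>auto simp: power_mult_distrib\<close>)
  ultimately show ?thesis by simp
qed

lemma norm_wsum:
  fixes x :: "'i \<Rightarrow> 'v::real_normed_vector" and c :: "'i \<Rightarrow> real"
  shows "(norm (\<Sum>n\<in>A. c n *\<^sub>R x n))\<^sup>2 \<le> (\<Sum>n\<in>A. \<bar>c n\<bar>) * (\<Sum>n\<in>A. \<bar>c n\<bar> * (norm (x n))\<^sup>2)"
proof -
  have "norm (\<Sum>n\<in>A. c n *\<^sub>R x n) \<le> (\<Sum>n\<in>A. \<bar>c n\<bar> * norm (x n))"
    using norm_sum[of "\<lambda>n. c n *\<^sub>R x n" A] by simp
  then have "(norm (\<Sum>n\<in>A. c n *\<^sub>R x n))\<^sup>2 \<le> (\<Sum>n\<in>A. \<bar>c n\<bar> * norm (x n))\<^sup>2"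
    by (rule power_mono) simp
  also have "\<dots> \<le> (\<Sum>n\<in>A. \<bar>c n\<bar>) * (\<Sum>n\<in>A. \<bar>c n\<bar> * (norm (x n))\<^sup>2)"
    by (rule wCS) simp
  finally show ?thesis .
qed

lemma norm_sum_sq:
  fixes x :: "'i \<Rightarrow> 'v::real_normed_vector"
  shows "(norm (\<Sum>n\<in>A. x n))\<^sup>2 \<le> real (card A) * (\<Sum>n\<in>A. (norm (x n))\<^sup>2)"
  using norm_wsum[of "\<lambda>_. 1" x A] by simp

lemma three_sq:
  fixes a b c :: "'v::real_normed_vector"
  shows "(norm (a + b + c))\<^sup>2 \<le> 3 * ((norm a)\<^sup>2 + (norm b)\<^sup>2 + (norm c)\<^sup>2)"
proof -
  have "norm (a + b + c) \<le> norm a + norm b + norm c"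
    by (smt (verit) norm_triangle_ineq)
  then have "(norm (a + b + c))\<^sup>2 \<le> (norm a + norm b + norm c)\<^sup>2"
    by (rule power_mono) simp
  also have "\<dots> \<le> 3 * ((norm a)\<^sup>2 + (norm b)\<^sup>2 + (norm c)\<^sup>2)"
  proof -
    have "0 \<le> (norm a - norm b)\<^sup>2 + (norm b - norm c)\<^sup>2 + (norm a - norm c)\<^sup>2" by simp
    then show ?thesis by (simp add: power2_eq_square algebra_simps)
  qed
  finally show ?thesis .
qed

lemma loc_sum:
  "loc \<beta> gam Gf u w k = w - gam *\<^sub>R (\<Sum>j<k. Gf j (\<beta> *\<^sub>R loc \<beta> gam Gf u w j + (1 - \<beta>) *\<^sub>R u))"
  by (induction k) (simp_all add: algebra_simps)


theorem lemma7:
  fixes M :: "'a measure" and S :: "'s measure"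
    and C E :: nat and p :: "nat \<Rightarrow> nat \<Rightarrow> real"
    and \<beta> L \<sigma> G :: real and \<gamma> :: "nat \<Rightarrow> real"
    and F :: "nat \<Rightarrow> 'v::euclidean_space \<Rightarrow> real" and gradF :: "nat \<Rightarrow> 'v \<Rightarrow> 'v"
    and g :: "nat \<Rightarrow> 'v \<Rightarrow> 's \<Rightarrow> 'v" and \<xi> :: "nat \<Rightarrow> nat \<Rightarrow> nat \<Rightarrow> 'a \<Rightarrow> 's"
    and w0 :: 'v
  assumes M: "prob_space M"
    and beta: "0 < \<beta>" "\<beta> < 1"
    and E: "E \<ge> 1"
    and step: "\<And>t. \<gamma> t > 0"
    and p_nonneg: "\<And>i n. p i n \<ge> 0"
    and p_sym: "\<And>i n. p i n = p n i"
    and p_diag: "\<And>i. p i i = 0"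
    and p_sum: "(\<Sum>i<C. \<Sum>n<C. p i n) = 1"
    and p_pos: "\<And>i. i < C \<Longrightarrow> pw C p i > 0"
    and xi_rv: "\<And>i t k. \<xi> i t k \<in> measurable M S"
    and xi_indep: "prob_space.indep_vars M (\<lambda>_. S) (\<lambda>(i, t, k). \<xi> i t k)
                     ({..<C} \<times> UNIV \<times> {..<E})"
    and g_meas: "\<And>i. (\<lambda>(x, s). g i x s) \<in> borel_measurable (borel \<Otimes>\<^sub>M S)"
    and F_grad: "\<And>i x. (F i has_derivative (\<lambda>h. gradF i x \<bullet> h)) (at x)"
    and L_smooth: "\<And>i x y. norm (gradF i x - gradF i y) \<le> L * norm (x - y)"
    and unbiased: "\<And>i t k x. i < C \<Longrightarrow> k < E \<Longrightarrow>
        integrable M (\<lambda>\<omega>. g i x (\<xi> i t k \<omega>)) \<and>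
        integral\<^sup>L M (\<lambda>\<omega>. g i x (\<xi> i t k \<omega>)) = gradF i x"
    and variance: "\<And>i t k. i < C \<Longrightarrow> k < E \<Longrightarrow>
        integrable M (\<lambda>\<omega>. (norm (g i (fed_wt C p \<beta> E \<gamma> g \<xi> w0 i t k \<omega>) (\<xi> i t k \<omega>)
                                  - gradF i (fed_wt C p \<beta> E \<gamma> g \<xi> w0 i t k \<omega>)))\<^sup>2) \<and>
        integral\<^sup>L M (\<lambda>\<omega>. (norm (g i (fed_wt C p \<beta> E \<gamma> g \<xi> w0 i t k \<omega>) (\<xi> i t k \<omega>)
                                  - gradF i (fed_wt C p \<beta> E \<gamma> g \<xi> w0 i t k \<omega>)))\<^sup>2) \<le> \<sigma>\<^sup>2"
    and second_moment: "\<And>i t k. i < C \<Longrightarrow> k < E \<Longrightarrow>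
        integrable M (\<lambda>\<omega>. (norm (g i (fed_wt C p \<beta> E \<gamma> g \<xi> w0 i t k \<omega>) (\<xi> i t k \<omega>)))\<^sup>2) \<and>
        integral\<^sup>L M (\<lambda>\<omega>. (norm (g i (fed_wt C p \<beta> E \<gamma> g \<xi> w0 i t k \<omega>) (\<xi> i t k \<omega>)))\<^sup>2) \<le> G\<^sup>2"
    and i: "i < C" and k: "k < E"
  shows "integral\<^sup>L M (\<lambda>\<omega>. (norm (fed_wbar C p \<beta> E \<gamma> g \<xi> w0 t k \<omega>
                                   - fed_wt C p \<beta> E \<gamma> g \<xi> w0 i t k \<omega>))\<^sup>2)
         \<le> 4 * (\<gamma> t)\<^sup>2 * (real E)\<^sup>2 * G\<^sup>2 *
            (4 + (1 - \<beta>)\<^sup>2 +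
             (if t \<ge> 1 then 8 * (\<gamma> (t - 1))\<^sup>2 / (\<gamma> t)\<^sup>2 * (1 - 1 / \<beta>)\<^sup>2 else 0))"
proof -
  define A where "A n s j \<omega> = g n (fed_wt C p \<beta> E \<gamma> g \<xi> w0 n s j \<omega>) (\<xi> n s j \<omega>)" for n s j \<omega>
  define SA where "SA n s kk \<omega> = (\<Sum>j<kk. A n s j \<omega>)" for n s kk \<omega>
  define a where "a n s j \<omega> = (norm (A n s j \<omega>))\<^sup>2" for n s j \<omega>
  define wb where "wb s \<omega> = fst (rnd C p \<beta> E \<gamma> g \<xi> w0 \<omega> s)" for s \<omega>
  define pp where "pp n = pw C p n" for n
  have p1: "(\<Sum>n<C. pp n) = 1" using p_sum by (simp add: pp_def pw_def)
  have pp_nn: "\<And>n. 0 \<le> pp n" by (simp add: pp_def pw_def sum_nonneg p_nonneg)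
  have fw: "\<And>n s kk \<omega>. fed_w C p \<beta> E \<gamma> g \<xi> w0 n s kk \<omega> = wb s \<omega> - \<gamma> s *\<^sub>R SA n s kk \<omega>"
    unfolding fed_w_def wb_def SA_def A_def
    apply (subst loc_sum)
    apply (simp add: fed_wt_def fed_w_def fed_u_def)
    done
  have wbar: "\<And>\<omega>. fed_wbar C p \<beta> E \<gamma> g \<xi> w0 t k \<omega> = wb t \<omega> - \<gamma> t *\<^sub>R (\<Sum>n<C. pp n *\<^sub>R SA n t k \<omega>)"
  proof -
    fix \<omega>
    have "fed_wbar C p \<beta> E \<gamma> g \<xi> w0 t k \<omega> = (\<Sum>n<C. pp n *\<^sub>R (wb t \<omega> - \<gamma> t *\<^sub>R SA n t k \<omega>))"
      by (simp add: fed_wbar_def fw pp_def)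
    also have "\<dots> = (\<Sum>n<C. pp n) *\<^sub>R wb t \<omega> - \<gamma> t *\<^sub>R (\<Sum>n<C. pp n *\<^sub>R SA n t k \<omega>)"
    proof -
      have "(\<Sum>n<C. pp n *\<^sub>R (wb t \<omega> - \<gamma> t *\<^sub>R SA n t k \<omega>))
          = (\<Sum>n<C. pp n *\<^sub>R wb t \<omega> - \<gamma> t *\<^sub>R (pp n *\<^sub>R SA n t k \<omega>))"
        by (rule sum.cong) (simp_all add: scaleR_right_diff_distrib)
      also have "\<dots> = (\<Sum>n<C. pp n *\<^sub>R wb t \<omega>) - (\<Sum>n<C. \<gamma> t *\<^sub>R (pp n *\<^sub>R SA n t k \<omega>))"
        by (rule sum_subtractf)
      also have "\<dots> = (\<Sum>n<C. pp n) *\<^sub>R wb t \<omega> - \<gamma> t *\<^sub>R (\<Sum>n<C. pp n *\<^sub>R SA n t k \<omega>)"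
        by (simp only: scaleR_sum_left scaleR_sum_right)
      finally show ?thesis .
    qed
    finally show "fed_wbar C p \<beta> E \<gamma> g \<xi> w0 t k \<omega> = wb t \<omega> - \<gamma> t *\<^sub>R (\<Sum>n<C. pp n *\<^sub>R SA n t k \<omega>)"
      by (simp add: p1)
  qed
  define R where "R \<omega> = wb t \<omega> - fed_u C p \<beta> E \<gamma> g \<xi> w0 i t \<omega>" for \<omega>
  have diff: "\<And>\<omega>. fed_wbar C p \<beta> E \<gamma> g \<xi> w0 t k \<omega> - fed_wt C p \<beta> E \<gamma> g \<xi> w0 i t k \<omega>
      = (1 - \<beta>) *\<^sub>R R \<omega> + (- (\<gamma> t *\<^sub>R (\<Sum>n<C. pp n *\<^sub>R SA n t k \<omega>))) + (\<beta> * \<gamma> t) *\<^sub>R SA i t k \<omega>"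
    by (simp add: wbar fed_wt_def fw R_def algebra_simps)
  have ia_all: "\<And>n s j. n < C \<Longrightarrow> j < E \<Longrightarrow> integrable M (a n s j)"
    using second_moment unfolding a_def A_def by blast
  have intg: "\<And>c K J s. J \<le> E \<Longrightarrow> integrable M (\<lambda>\<omega>. \<Sum>n<C. c n * (K * (\<Sum>j<J. a n s j \<omega>)))"
  proof -
    fix c K J s assume J: "J \<le> E"
    have "\<And>n j. n < C \<Longrightarrow> j < J \<Longrightarrow> integrable M (a n s j)" using ia_all J by auto
    then show "integrable M (\<lambda>\<omega>. \<Sum>n<C. c n * (K * (\<Sum>j<J. a n s j \<omega>)))"
      by (intro Bochner_Integration.integrable_sum Bochner_Integration.integrable_mult_right) auto
  qed
  have intb: "\<And>c K J s. J \<le> E \<Longrightarrow> (\<And>n. 0 \<le> c n) \<Longrightarrow> 0 \<le> K \<Longrightarrow>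
      integral\<^sup>L M (\<lambda>\<omega>. \<Sum>n<C. c n * (K * (\<Sum>j<J. a n s j \<omega>))) \<le> (\<Sum>n<C. c n) * K * J * G\<^sup>2"
  proof -
    fix c :: "nat \<Rightarrow> real" and K :: real and J s :: nat
    assume J: "J \<le> E" and c: "\<And>n. 0 \<le> c n" and K: "0 \<le> K"
    have ia: "\<And>n j. n < C \<Longrightarrow> j < J \<Longrightarrow> integrable M (a n s j) \<and> integral\<^sup>L M (a n s j) \<le> G\<^sup>2"
      using second_moment J unfolding a_def A_def by auto
    have "integral\<^sup>L M (\<lambda>\<omega>. \<Sum>n<C. c n * (K * (\<Sum>j<J. a n s j \<omega>)))
        = (\<Sum>n<C. integral\<^sup>L M (\<lambda>\<omega>. c n * (K * (\<Sum>j<J. a n s j \<omega>))))"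
      by (rule Bochner_Integration.integral_sum)
         (use ia in \<open>auto intro!: Bochner_Integration.integrable_mult_right Bochner_Integration.integrable_sum\<close>)
    also have "\<dots> = (\<Sum>n<C. c n * (K * (\<Sum>j<J. integral\<^sup>L M (a n s j))))"
    proof (rule sum.cong[OF refl])
      fix n assume n: "n \<in> {..<C}"
      have "integral\<^sup>L M (\<lambda>\<omega>. \<Sum>j<J. a n s j \<omega>) = (\<Sum>j<J. integral\<^sup>L M (a n s j))"
        by (rule Bochner_Integration.integral_sum) (use ia n in auto)
      then show "integral\<^sup>L M (\<lambda>\<omega>. c n * (K * (\<Sum>j<J. a n s j \<omega>))) = c n * (K * (\<Sum>j<J. integral\<^sup>L M (a n s j)))"
        by simp
    qed
    also have "\<dots> \<le> (\<Sum>n<C. c n * (K * (J * G\<^sup>2)))"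
    proof (rule sum_mono)
      fix n assume n: "n \<in> {..<C}"
      have "(\<Sum>j<J. integral\<^sup>L M (a n s j)) \<le> (\<Sum>j<J. G\<^sup>2)"
        by (rule sum_mono) (use ia n in auto)
      then show "c n * (K * (\<Sum>j<J. integral\<^sup>L M (a n s j))) \<le> c n * (K * (J * G\<^sup>2))"
        using c K by (simp add: mult_left_mono)
    qed
    also have "\<dots> = (\<Sum>n<C. c n) * K * J * G\<^sup>2"
      by (simp add: sum_distrib_right mult.assoc)
    finally show "integral\<^sup>L M (\<lambda>\<omega>. \<Sum>n<C. c n * (K * (\<Sum>j<J. a n s j \<omega>))) \<le> (\<Sum>n<C. c n) * K * J * G\<^sup>2" .
  qed
  have SAb: "\<And>n s kk \<omega>. (norm (SA n s kk \<omega>))\<^sup>2 \<le> kk * (\<Sum>j<kk. a n s j \<omega>)"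
  proof -
    fix n s kk \<omega>
    have "(norm (\<Sum>j<kk. A n s j \<omega>))\<^sup>2 \<le> real (card {..<kk}) * (\<Sum>j<kk. (norm (A n s j \<omega>))\<^sup>2)"
      by (rule norm_sum_sq)
    then show "(norm (SA n s kk \<omega>))\<^sup>2 \<le> kk * (\<Sum>j<kk. a n s j \<omega>)"
      by (simp add: SA_def a_def)
  qed
  obtain r where r_bd: "\<And>\<omega>. (norm (R \<omega>))\<^sup>2 \<le> r \<omega>" and r_nn: "\<And>\<omega>. 0 \<le> r \<omega>"
    and r_int: "integrable M r"
    and r_I: "integral\<^sup>L M r \<le> (if t \<ge> 1 then 4 * (\<gamma> (t - 1))\<^sup>2 * (real E)\<^sup>2 * G\<^sup>2 else 0)"
  proof (cases t)
    case 0
    have "\<And>\<omega>. R \<omega> = 0" by (simp add: R_def wb_def fed_u_def 0)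
    then show ?thesis by (intro that[of "\<lambda>_. 0"]) (simp_all add: 0)
  next
    case (Suc t')
    define d where "d n = pp n - p i n / pp i" for n
    have ppi: "pp i > 0" using p_pos i by (simp add: pp_def)
    have ppi_sum: "(\<Sum>n<C. p i n) = pp i" by (simp add: pp_def pw_def)
    have dsum: "(\<Sum>n<C. d n) = 0"
      using ppi by (simp add: d_def sum_subtractf p1 sum_divide_distrib[symmetric] ppi_sum)
    have dabs: "(\<Sum>n<C. \<bar>d n\<bar>) \<le> 2"
    proof -
      have "(\<Sum>n<C. \<bar>d n\<bar>) \<le> (\<Sum>n<C. pp n + p i n / pp i)"
      proof (rule sum_mono)
        fix n
        have "0 \<le> p i n / pp i" using ppi p_nonneg by simp
        then show "\<bar>d n\<bar> \<le> pp n + p i n / pp i" using pp_nn[of n] unfolding d_def by linarith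
      qed
      also have "\<dots> = 2"
        using ppi by (simp add: sum.distrib p1 sum_divide_distrib[symmetric] ppi_sum)
      finally show ?thesis .
    qed
    have Req: "\<And>\<omega>. R \<omega> = - (\<gamma> t' *\<^sub>R (\<Sum>n<C. d n *\<^sub>R SA n t' E \<omega>))"
    proof -
      fix \<omega>
      have "R \<omega> = (\<Sum>n<C. pp n *\<^sub>R fed_w C p \<beta> E \<gamma> g \<xi> w0 n t' E \<omega>)
                 - (1 / pp i) *\<^sub>R (\<Sum>n<C. p i n *\<^sub>R fed_w C p \<beta> E \<gamma> g \<xi> w0 n t' E \<omega>)"
        by (simp add: R_def wb_def fed_u_def Suc fed_w_def pp_def Let_def)
      also have "\<dots> = (\<Sum>n<C. d n *\<^sub>R fed_w C p \<beta> E \<gamma> g \<xi> w0 n t' E \<omega>)"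
        by (simp add: d_def scaleR_sum_right scaleR_diff_left sum_subtractf)
      also have "\<dots> = (\<Sum>n<C. d n *\<^sub>R wb t' \<omega> - \<gamma> t' *\<^sub>R (d n *\<^sub>R SA n t' E \<omega>))"
        by (rule sum.cong) (simp_all add: fw scaleR_right_diff_distrib)
      also have "\<dots> = (\<Sum>n<C. d n *\<^sub>R wb t' \<omega>) - (\<Sum>n<C. \<gamma> t' *\<^sub>R (d n *\<^sub>R SA n t' E \<omega>))"
        by (rule sum_subtractf)
      also have "\<dots> = (\<Sum>n<C. d n) *\<^sub>R wb t' \<omega> - \<gamma> t' *\<^sub>R (\<Sum>n<C. d n *\<^sub>R SA n t' E \<omega>)"
        by (simp only: scaleR_sum_left scaleR_sum_right)
      finally show "R \<omega> = - (\<gamma> t' *\<^sub>R (\<Sum>n<C. d n *\<^sub>R SA n t' E \<omega>))" by (simp add: dsum)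
    qed
    define r where "r \<omega> = (\<gamma> t')\<^sup>2 * (2 * (\<Sum>n<C. \<bar>d n\<bar> * (real E * (\<Sum>j<E. a n t' j \<omega>))))" for \<omega>
    show ?thesis
    proof (rule that[of r])
      fix \<omega>
      have "(norm (R \<omega>))\<^sup>2 = (\<gamma> t')\<^sup>2 * (norm (\<Sum>n<C. d n *\<^sub>R SA n t' E \<omega>))\<^sup>2"
        by (simp add: Req power_mult_distrib)
      also have "\<dots> \<le> (\<gamma> t')\<^sup>2 * ((\<Sum>n<C. \<bar>d n\<bar>) * (\<Sum>n<C. \<bar>d n\<bar> * (norm (SA n t' E \<omega>))\<^sup>2))"
        by (rule mult_left_mono[OF norm_wsum]) simp
      also have "\<dots> \<le> (\<gamma> t')\<^sup>2 * (2 * (\<Sum>n<C. \<bar>d n\<bar> * (real E * (\<Sum>j<E. a n t' j \<omega>))))"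
      proof (rule mult_left_mono[OF mult_mono])
        show "(\<Sum>n<C. \<bar>d n\<bar> * (norm (SA n t' E \<omega>))\<^sup>2) \<le> (\<Sum>n<C. \<bar>d n\<bar> * (real E * (\<Sum>j<E. a n t' j \<omega>)))"
          by (rule sum_mono, rule mult_left_mono[OF SAb]) simp
      qed (use dabs in \<open>auto intro: sum_nonneg\<close>)
      finally show "(norm (R \<omega>))\<^sup>2 \<le> r \<omega>" by (simp add: r_def)
    next
      fix \<omega>
      show "0 \<le> r \<omega>" unfolding r_def a_def by (intro mult_nonneg_nonneg sum_nonneg) auto
    next
      show "integrable M r" unfolding r_def
        by (intro integrable_mult_right intg) simp
    next
      have "integral\<^sup>L M r = (\<gamma> t')\<^sup>2 * (2 * integral\<^sup>L M (\<lambda>\<omega>. \<Sum>n<C. \<bar>d n\<bar> * (real E * (\<Sum>j<E. a n t' j \<omega>))))"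
        unfolding r_def by simp
      also have "\<dots> \<le> (\<gamma> t')\<^sup>2 * (2 * ((\<Sum>n<C. \<bar>d n\<bar>) * real E * real E * G\<^sup>2))"
        by (intro mult_left_mono intb) auto
      also have "\<dots> \<le> (\<gamma> t')\<^sup>2 * (2 * (2 * real E * real E * G\<^sup>2))"
        by (intro mult_left_mono mult_right_mono dabs) auto
      finally show "integral\<^sup>L M r \<le> (if t \<ge> 1 then 4 * (\<gamma> (t - 1))\<^sup>2 * (real E)\<^sup>2 * G\<^sup>2 else 0)"
        by (simp add: Suc power2_eq_square)
    qed
  qed
  define f1 where "f1 \<omega> = (\<Sum>n<C. pp n * (real k * (\<Sum>j<k. a n t j \<omega>)))" for \<omega>
  define ci where "ci n = (if n = i then 1 else (0::real))" for n
  define f2 where "f2 \<omega> = (\<Sum>n<C. ci n * (real k * (\<Sum>j<k. a n t j \<omega>)))" for \<omega>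
  have kE: "k \<le> E" using k by simp
  have f1_int: "integrable M f1" unfolding f1_def[abs_def] by (rule intg[OF kE])
  have f2_int: "integrable M f2" unfolding f2_def[abs_def] by (rule intg[OF kE])
  have ci_sum: "(\<Sum>n<C. ci n) = 1" using i by (simp add: ci_def)
  have f1_I: "integral\<^sup>L M f1 \<le> real k * real k * G\<^sup>2"
    using intb[of k pp "real k" t, OF kE pp_nn] p1 unfolding f1_def[abs_def] by simp
  have f2_I: "integral\<^sup>L M f2 \<le> real k * real k * G\<^sup>2"
    using intb[of k ci "real k" t, OF kE] ci_sum unfolding f2_def[abs_def] by (simp add: ci_def)
  have f2_eq: "\<And>\<omega>. f2 \<omega> = real k * (\<Sum>j<k. a i t j \<omega>)"
  proof -
    fix \<omega>
    have "f2 \<omega> = (\<Sum>n<C. if n = i then real k * (\<Sum>j<k. a n t j \<omega>) else 0)"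
      unfolding f2_def ci_def by (rule sum.cong) auto
    then show "f2 \<omega> = real k * (\<Sum>j<k. a i t j \<omega>)" using i by simp
  qed
  have a_nn: "\<And>n s j \<omega>. 0 \<le> a n s j \<omega>" by (simp add: a_def)
  have f1_nn: "\<And>\<omega>. 0 \<le> f1 \<omega>" unfolding f1_def
    by (intro sum_nonneg mult_nonneg_nonneg pp_nn a_nn) auto
  have f2_nn: "\<And>\<omega>. 0 \<le> f2 \<omega>" unfolding f2_eq
    by (intro sum_nonneg mult_nonneg_nonneg a_nn) auto
  have pwb: "\<And>\<omega>. (norm (fed_wbar C p \<beta> E \<gamma> g \<xi> w0 t k \<omega> - fed_wt C p \<beta> E \<gamma> g \<xi> w0 i t k \<omega>))\<^sup>2
      \<le> 3 * ((1 - \<beta>)\<^sup>2 * r \<omega> + (\<gamma> t)\<^sup>2 * f1 \<omega> + (\<beta> * \<gamma> t)\<^sup>2 * f2 \<omega>)"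
  proof -
    fix \<omega>
    have e0: "(norm (fed_wbar C p \<beta> E \<gamma> g \<xi> w0 t k \<omega> - fed_wt C p \<beta> E \<gamma> g \<xi> w0 i t k \<omega>))\<^sup>2
      \<le> 3 * ((norm ((1 - \<beta>) *\<^sub>R R \<omega>))\<^sup>2 + (norm (- (\<gamma> t *\<^sub>R (\<Sum>n<C. pp n *\<^sub>R SA n t k \<omega>))))\<^sup>2
             + (norm ((\<beta> * \<gamma> t) *\<^sub>R SA i t k \<omega>))\<^sup>2)"
      unfolding diff by (rule three_sq)
    have e1: "(norm ((1 - \<beta>) *\<^sub>R R \<omega>))\<^sup>2 \<le> (1 - \<beta>)\<^sup>2 * r \<omega>"
    proof -
      have "(norm ((1 - \<beta>) *\<^sub>R R \<omega>))\<^sup>2 = (1 - \<beta>)\<^sup>2 * (norm (R \<omega>))\<^sup>2"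
        by (simp add: power_mult_distrib)
      also have "\<dots> \<le> (1 - \<beta>)\<^sup>2 * r \<omega>" by (rule mult_left_mono[OF r_bd]) simp
      finally show ?thesis .
    qed
    have e2: "(norm (- (\<gamma> t *\<^sub>R (\<Sum>n<C. pp n *\<^sub>R SA n t k \<omega>))))\<^sup>2 \<le> (\<gamma> t)\<^sup>2 * f1 \<omega>"
    proof -
      have "(norm (- (\<gamma> t *\<^sub>R (\<Sum>n<C. pp n *\<^sub>R SA n t k \<omega>))))\<^sup>2
          = (\<gamma> t)\<^sup>2 * (norm (\<Sum>n<C. pp n *\<^sub>R SA n t k \<omega>))\<^sup>2"
        by (simp add: power_mult_distrib)
      also have "\<dots> \<le> (\<gamma> t)\<^sup>2 * ((\<Sum>n<C. \<bar>pp n\<bar>) * (\<Sum>n<C. \<bar>pp n\<bar> * (norm (SA n t k \<omega>))\<^sup>2))"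
        by (rule mult_left_mono[OF norm_wsum]) simp
      also have "\<dots> = (\<gamma> t)\<^sup>2 * (\<Sum>n<C. pp n * (norm (SA n t k \<omega>))\<^sup>2)"
        using pp_nn p1 by simp
      also have "\<dots> \<le> (\<gamma> t)\<^sup>2 * f1 \<omega>"
        unfolding f1_def
        by (intro mult_left_mono sum_mono mult_left_mono[OF SAb] pp_nn) simp_all
      finally show ?thesis .
    qed
    have e3: "(norm ((\<beta> * \<gamma> t) *\<^sub>R SA i t k \<omega>))\<^sup>2 \<le> (\<beta> * \<gamma> t)\<^sup>2 * f2 \<omega>"
    proof -
      have "(norm ((\<beta> * \<gamma> t) *\<^sub>R SA i t k \<omega>))\<^sup>2 = (\<beta> * \<gamma> t)\<^sup>2 * (norm (SA i t k \<omega>))\<^sup>2"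
        by (simp add: power_mult_distrib)
      also have "\<dots> \<le> (\<beta> * \<gamma> t)\<^sup>2 * f2 \<omega>"
        unfolding f2_eq by (rule mult_left_mono[OF SAb]) simp
      finally show ?thesis .
    qed
    show "(norm (fed_wbar C p \<beta> E \<gamma> g \<xi> w0 t k \<omega> - fed_wt C p \<beta> E \<gamma> g \<xi> w0 i t k \<omega>))\<^sup>2
      \<le> 3 * ((1 - \<beta>)\<^sup>2 * r \<omega> + (\<gamma> t)\<^sup>2 * f1 \<omega> + (\<beta> * \<gamma> t)\<^sup>2 * f2 \<omega>)"
      by (rule order_trans[OF e0], intro mult_left_mono add_mono e1 e2 e3) simp
  qed
  have h_int: "integrable M (\<lambda>\<omega>. 3 * ((1 - \<beta>)\<^sup>2 * r \<omega> + (\<gamma> t)\<^sup>2 * f1 \<omega> + (\<beta> * \<gamma> t)\<^sup>2 * f2 \<omega>))"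
    using r_int f1_int f2_int by simp
  have hI: "integral\<^sup>L M (\<lambda>\<omega>. 3 * ((1 - \<beta>)\<^sup>2 * r \<omega> + (\<gamma> t)\<^sup>2 * f1 \<omega> + (\<beta> * \<gamma> t)\<^sup>2 * f2 \<omega>))
      = 3 * ((1 - \<beta>)\<^sup>2 * integral\<^sup>L M r + (\<gamma> t)\<^sup>2 * integral\<^sup>L M f1 + (\<beta> * \<gamma> t)\<^sup>2 * integral\<^sup>L M f2)"
    using r_int f1_int f2_int by (simp add: Bochner_Integration.integral_add)
  have step1: "integral\<^sup>L M (\<lambda>\<omega>. (norm (fed_wbar C p \<beta> E \<gamma> g \<xi> w0 t k \<omega>
                                   - fed_wt C p \<beta> E \<gamma> g \<xi> w0 i t k \<omega>))\<^sup>2)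
      \<le> 3 * ((1 - \<beta>)\<^sup>2 * integral\<^sup>L M r + (\<gamma> t)\<^sup>2 * integral\<^sup>L M f1 + (\<beta> * \<gamma> t)\<^sup>2 * integral\<^sup>L M f2)"
    unfolding hI[symmetric]
    by (rule integral_mono'[OF h_int pwb]) (intro mult_nonneg_nonneg add_nonneg_nonneg r_nn f1_nn f2_nn; simp)
  define B3 where "B3 = (if t \<ge> 1 then 4 * (\<gamma> (t - 1))\<^sup>2 * (real E)\<^sup>2 * G\<^sup>2 else 0)"
  have kk: "real k * real k \<le> (real E)\<^sup>2" using kE by (simp add: power2_eq_square mult_mono)
  have G2: "0 \<le> G\<^sup>2" by simp
  have b2: "\<beta>\<^sup>2 \<le> 1" using beta by (simp add: power_le_one)
  have gt: "0 < (\<gamma> t)\<^sup>2" using step[of t] by simp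
  have s1: "(\<gamma> t)\<^sup>2 * integral\<^sup>L M f1 \<le> (\<gamma> t)\<^sup>2 * ((real E)\<^sup>2 * G\<^sup>2)"
    using f1_I kk G2 gt by (meson less_imp_le mult_left_mono mult_right_mono order_trans)
  have s2: "(\<beta> * \<gamma> t)\<^sup>2 * integral\<^sup>L M f2 \<le> (\<gamma> t)\<^sup>2 * ((real E)\<^sup>2 * G\<^sup>2)"
  proof -
    have "(\<beta> * \<gamma> t)\<^sup>2 * integral\<^sup>L M f2 \<le> (\<beta> * \<gamma> t)\<^sup>2 * ((real E)\<^sup>2 * G\<^sup>2)"
      using f2_I kk G2 by (meson mult_left_mono mult_right_mono order_trans zero_le_power2)
    also have "\<dots> = \<beta>\<^sup>2 * ((\<gamma> t)\<^sup>2 * ((real E)\<^sup>2 * G\<^sup>2))" by (simp add: power_mult_distrib)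
    also have "\<dots> \<le> 1 * ((\<gamma> t)\<^sup>2 * ((real E)\<^sup>2 * G\<^sup>2))"
      by (rule mult_right_mono[OF b2]) simp
    finally show ?thesis by simp
  qed
  have s3: "3 * ((1 - \<beta>)\<^sup>2 * B3) \<le> 4 * (\<gamma> t)\<^sup>2 * (real E)\<^sup>2 * G\<^sup>2 *
             (if t \<ge> 1 then 8 * (\<gamma> (t - 1))\<^sup>2 / (\<gamma> t)\<^sup>2 * (1 - 1 / \<beta>)\<^sup>2 else 0)"
  proof (cases "t \<ge> 1")
    case True
    have bb: "1 - \<beta> \<le> 1 / \<beta> - 1"
    proof -
      have "0 \<le> (1 - \<beta>)\<^sup>2" by simp
      then have "\<beta> * (1 - \<beta>) \<le> 1 - \<beta>" by (simp add: power2_eq_square algebra_simps)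
      then show ?thesis using beta by (simp add: field_simps)
    qed
    have Q: "(1 - \<beta>)\<^sup>2 \<le> (1 - 1 / \<beta>)\<^sup>2"
    proof -
      have "(1 - \<beta>)\<^sup>2 \<le> (1 / \<beta> - 1)\<^sup>2" by (rule power_mono[OF bb]) (use beta in simp)
      then show ?thesis by (simp add: power2_commute)
    qed
    define P where "P = (\<gamma> (t - 1))\<^sup>2 * (real E)\<^sup>2 * G\<^sup>2"
    have P0: "0 \<le> P" by (simp add: P_def)
    have "3 * ((1 - \<beta>)\<^sup>2 * B3) = 12 * ((1 - \<beta>)\<^sup>2 * P)" using True by (simp add: B3_def P_def)
    also have "\<dots> \<le> 32 * ((1 - 1 / \<beta>)\<^sup>2 * P)" 
    proof -
      have q1: "(1 - \<beta>)\<^sup>2 * P \<le> (1 - 1 / \<beta>)\<^sup>2 * P" by (rule mult_right_mono[OF Q P0])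
      have q0: "0 \<le> (1 - \<beta>)\<^sup>2 * P" using P0 by simp
      show ?thesis using q1 q0 by linarith
    qed
    also have "\<dots> = 4 * (\<gamma> t)\<^sup>2 * (real E)\<^sup>2 * G\<^sup>2 *
             (8 * (\<gamma> (t - 1))\<^sup>2 / (\<gamma> t)\<^sup>2 * (1 - 1 / \<beta>)\<^sup>2)"
      using gt by (simp add: P_def field_simps)
    finally show ?thesis using True by simp
  qed (simp add: B3_def)
  have s4: "0 \<le> 4 * (\<gamma> t)\<^sup>2 * (real E)\<^sup>2 * G\<^sup>2 * (1 - \<beta>)\<^sup>2" by simp
  have s5: "(1 - \<beta>)\<^sup>2 * integral\<^sup>L M r \<le> (1 - \<beta>)\<^sup>2 * B3"
    unfolding B3_def by (rule mult_left_mono[OF r_I]) simp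
  have "integral\<^sup>L M (\<lambda>\<omega>. (norm (fed_wbar C p \<beta> E \<gamma> g \<xi> w0 t k \<omega>
                                   - fed_wt C p \<beta> E \<gamma> g \<xi> w0 i t k \<omega>))\<^sup>2)
      \<le> 3 * ((1 - \<beta>)\<^sup>2 * B3) + 6 * ((\<gamma> t)\<^sup>2 * ((real E)\<^sup>2 * G\<^sup>2))"
    using step1 s1 s2 s5 by argo
  also have "\<dots> \<le> 4 * (\<gamma> t)\<^sup>2 * (real E)\<^sup>2 * G\<^sup>2 *
            (4 + (1 - \<beta>)\<^sup>2 +
             (if t \<ge> 1 then 8 * (\<gamma> (t - 1))\<^sup>2 / (\<gamma> t)\<^sup>2 * (1 - 1 / \<beta>)\<^sup>2 else 0))"
  proof -
    define X where "X = (if t \<ge> 1 then 8 * (\<gamma> (t - 1))\<^sup>2 / (\<gamma> t)\<^sup>2 * (1 - 1 / \<beta>)\<^sup>2 else 0)"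
    have Z0: "0 \<le> (\<gamma> t)\<^sup>2 * ((real E)\<^sup>2 * G\<^sup>2)" by simp
    have eqY: "4 * (\<gamma> t)\<^sup>2 * (real E)\<^sup>2 * G\<^sup>2 * (4 + (1 - \<beta>)\<^sup>2 + X)
       = 16 * ((\<gamma> t)\<^sup>2 * ((real E)\<^sup>2 * G\<^sup>2)) + 4 * (\<gamma> t)\<^sup>2 * (real E)\<^sup>2 * G\<^sup>2 * (1 - \<beta>)\<^sup>2
         + 4 * (\<gamma> t)\<^sup>2 * (real E)\<^sup>2 * G\<^sup>2 * X"
      by (simp add: algebra_simps)
    have s3': "3 * ((1 - \<beta>)\<^sup>2 * B3) \<le> 4 * (\<gamma> t)\<^sup>2 * (real E)\<^sup>2 * G\<^sup>2 * X"
      using s3 unfolding X_def .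
    have "3 * ((1 - \<beta>)\<^sup>2 * B3) + 6 * ((\<gamma> t)\<^sup>2 * ((real E)\<^sup>2 * G\<^sup>2))
        \<le> 4 * (\<gamma> t)\<^sup>2 * (real E)\<^sup>2 * G\<^sup>2 * (4 + (1 - \<beta>)\<^sup>2 + X)"
      unfolding eqY using s3' s4 Z0 by linarith
    then show ?thesis unfolding X_def .
  qed
  finally show ?thesis .
qed

end
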